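(* Let $n\ge1$, $1\le q,q_1,q_2\le\infty$ and $s,s_1,s_2\in\mathbb{R}$. If $L(q_1,s_1)\ast L(q_2,s_2)\subset L(q,s)$, then $1+\frac1q\ge\frac1{q_1}+\frac1{q_2}$.
   Context: $\langle x\rangle=(1+|x|^2)^{1/2}$. For $1\le p\le\infty$, $s\in\mathbb{R}$, $L(p,s)$ is the space of measurable $f$ on $\mathbb{R}^n$ with $\|f\|_{L(p,s)}=\big(\int|f(x)|^p\langle x\rangle^{ps}dx\big)^{1/p}<\infty$ (ess sup of $|f(x)|\langle x\rangle^s$ if $p=\infty$). Convolution $(f\ast g)(x)=\int f(x-y)g(y)dy$. "$X\ast Y\subset Z$" means there is $C$ with $f\ast g\in Z$ and $\|f\ast g\|_Z\le C\|f\|_X\|g\|_Y$ for all $f\in X$, $g\in Y$. Convention $1/\infty=0$. *)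

theory Defs
  imports "HOL-Analysis.Analysis" "HOL-Probability.Essential_Supremum"
begin

definition jbr :: "'a::euclidean_space \<Rightarrow> real" where
  "jbr x = sqrt (1 + (norm x)\<^sup>2)"

text \<open>Exponents p in [1,\<infinity>] are represented as ennreal values, with \<infinity> = top.
  The weighted L^p functional (p < \<infinity>: the p-th power integral; p = \<infinity>: ess sup).\<close>
definition wint :: "ennreal \<Rightarrow> real \<Rightarrow> ('a::euclidean_space \<Rightarrow> real) \<Rightarrow> ennreal" where
  "wint p s f = (\<integral>\<^sup>+ x. ennreal (\<bar>f x\<bar> powr enn2real p * jbr x powr (enn2real p * s)) \<partial>lebesgue)"

definition wsup :: "real \<Rightarrow> ('a::euclidean_space \<Rightarrow> real) \<Rightarrow> ereal" where
  "wsup s f = esssup lebesgue (\<lambda>x. ereal (\<bar>f x\<bar> * jbr x powr s))"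

definition Lw :: "ennreal \<Rightarrow> real \<Rightarrow> ('a::euclidean_space \<Rightarrow> real) set" where
  "Lw p s = {f. f \<in> borel_measurable lebesgue \<and>
     (if p = top then wsup s f < top else wint p s f < top)}"

definition Lw_norm :: "ennreal \<Rightarrow> real \<Rightarrow> ('a::euclidean_space \<Rightarrow> real) \<Rightarrow> real" where
  "Lw_norm p s f = (if p = top then real_of_ereal (wsup s f)
                    else enn2real (wint p s f) powr (1 / enn2real p))"

definition conv :: "('a::euclidean_space \<Rightarrow> real) \<Rightarrow> ('a \<Rightarrow> real) \<Rightarrow> 'a \<Rightarrow> real" where
  "conv f g x = (\<integral> y. f (x - y) * g y \<partial>lebesgue)"

definition conv_incl :: "'a::euclidean_space itself \<Rightarrow> ennreal \<Rightarrow> real \<Rightarrow> ennreal \<Rightarrow> real \<Rightarrow> ennreal \<Rightarrow> real \<Rightarrow> bool" where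
  "conv_incl _ p1 s1 p2 s2 p s \<longleftrightarrow> (\<exists>C::real. \<forall>(f::'a::euclidean_space \<Rightarrow> real) g.
      f \<in> Lw p1 s1 \<longrightarrow> g \<in> Lw p2 s2 \<longrightarrow>
        (AE x in lebesgue. integrable lebesgue (\<lambda>y. f (x - y) * g y)) \<and>
        conv f g \<in> Lw p s \<and>
        Lw_norm p s (conv f g) \<le> C * Lw_norm p1 s1 f * Lw_norm p2 s2 g)"

end

theory Submission
  imports Defs
begin


lemma emeasure_lebesgue_ball:
  assumes "r \<ge> 0"
  shows "emeasure lebesgue (ball (0::'a::euclidean_space) r) = ennreal (unit_ball_vol DIM('a) * r ^ DIM('a))"
  using emeasure_ball[OF assms, of 0] by simp

lemma measure_lebesgue_ball:
  assumes "r \<ge> 0"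
  shows "measure lebesgue (ball (0::'a::euclidean_space) r) = unit_ball_vol DIM('a) * r ^ DIM('a)"
  using content_ball[OF assms, of 0] by simp

lemma jbr_bounds:
  fixes x :: "'a::euclidean_space"
  assumes "norm x \<le> 1"
  shows "jbr x powr e \<le> 2 powr \<bar>e\<bar>" "2 powr (-\<bar>e\<bar>) \<le> jbr x powr e"
proof -
  have j1: "1 \<le> jbr x" unfolding jbr_def by simp
  have "(norm x)^2 \<le> 1" using assms by (simp add: power_le_one)
  then have "jbr x \<le> sqrt 4" unfolding jbr_def by (intro real_sqrt_le_mono) simp
  then have j2: "jbr x \<le> 2" by simp
  have "jbr x powr e \<le> jbr x powr \<bar>e\<bar>" by (rule powr_mono[OF _ j1]) simp
  also have "\<dots> \<le> 2 powr \<bar>e\<bar>" by (rule powr_mono2) (use j1 j2 in auto)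
  finally show "jbr x powr e \<le> 2 powr \<bar>e\<bar>" .
  have "2 powr (-\<bar>e\<bar>) = inverse (2 powr \<bar>e\<bar>)" by (simp add: powr_minus)
  also have "\<dots> \<le> inverse (jbr x powr \<bar>e\<bar>)"
    using j1 j2 by (intro le_imp_inverse_le powr_mono2) auto
  also have "\<dots> = jbr x powr (-\<bar>e\<bar>)" by (simp add: powr_minus)
  also have "\<dots> \<le> jbr x powr e" by (rule powr_mono[OF _ j1]) simp
  finally show "2 powr (-\<bar>e\<bar>) \<le> jbr x powr e" .
qed

lemma wint_ind_upper:
  fixes r :: real
  assumes "0 < r" "r \<le> 1" "1 \<le> p"
  shows "wint (ennreal p) s (indicator (ball (0::'a::euclidean_space) r) :: 'a \<Rightarrow> real)
     \<le> ennreal (2 powr \<bar>p * s\<bar> * (unit_ball_vol DIM('a) * r ^ DIM('a)))"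
proof -
  have "wint (ennreal p) s (indicator (ball (0::'a) r) :: 'a \<Rightarrow> real)
     \<le> (\<integral>\<^sup>+ x. ennreal (2 powr \<bar>p * s\<bar>) * indicator (ball (0::'a) r) x \<partial>lebesgue)"
    unfolding wint_def
  proof (intro nn_integral_mono)
    fix x :: 'a
    show "ennreal (\<bar>indicator (ball 0 r) x :: real\<bar> powr enn2real (ennreal p) * jbr x powr (enn2real (ennreal p) * s))
         \<le> ennreal (2 powr \<bar>p * s\<bar>) * indicator (ball 0 r) x"
    proof (cases "x \<in> ball 0 r")
      case True
      then have "norm x \<le> 1" using assms by auto
      then show ?thesis using True assms jbr_bounds(1)[OF \<open>norm x \<le> 1\<close>, where e="p * s"] by (simp add: ennreal_leI)
    next
      case False then show ?thesis by simp
    qed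
  qed
  also have "\<dots> = ennreal (2 powr \<bar>p * s\<bar>) * emeasure lebesgue (ball (0::'a) r)"
    by (rule nn_integral_cmult_indicator) simp
  also have "\<dots> = ennreal (2 powr \<bar>p * s\<bar> * (unit_ball_vol DIM('a) * r ^ DIM('a)))"
    by (subst emeasure_lebesgue_ball) (use assms in \<open>auto simp: ennreal_mult\<close>)
  finally show ?thesis .
qed



lemma ind_in_Lw:
  assumes "0 < r" "r \<le> 1" "1 \<le> p"
  shows "(indicator (ball (0::'a::euclidean_space) r) :: 'a \<Rightarrow> real) \<in> Lw (ennreal p) s"
  using wint_ind_upper[OF assms, of s, where 'a='a] assms
  unfolding Lw_def
  by (auto simp: order.strict_trans1 intro!: borel_measurable_indicator)

lemma ind_norm_upper:
  assumes "0 < r" "r \<le> 1" "1 \<le> p"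
  shows "Lw_norm (ennreal p) s (indicator (ball (0::'a::euclidean_space) r) :: 'a \<Rightarrow> real)
     \<le> (2 powr \<bar>p * s\<bar> * (unit_ball_vol DIM('a) * r ^ DIM('a))) powr (1/p)"
proof -
  have "enn2real (wint (ennreal p) s (indicator (ball (0::'a) r) :: 'a \<Rightarrow> real))
     \<le> 2 powr \<bar>p * s\<bar> * (unit_ball_vol DIM('a) * r ^ DIM('a))"
    using enn2real_mono[OF wint_ind_upper[OF assms, of s, where 'a='a]] assms by simp
  then show ?thesis unfolding Lw_norm_def using assms
    by (auto intro!: powr_mono2)
qed

lemma conv_lower:
  fixes x :: "'a::euclidean_space"
  assumes "0 < r" "x \<in> ball 0 r"
  shows "unit_ball_vol DIM('a) * r ^ DIM('a) \<le>
     conv (indicator (ball (0::'a) (2*r))) (indicator (ball (0::'a) (2*r))) x"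
proof -
  let ?S = "ball x (2*r) \<inter> ball (0::'a) (2*r)"
  have eq: "(\<lambda>y. (indicator (ball (0::'a) (2*r)) (x - y) :: real) * indicator (ball (0::'a) (2*r)) y)
      = indicator ?S"
    by (rule ext) (auto simp: indicator_def dist_norm norm_minus_commute)
  have "conv (indicator (ball (0::'a) (2*r))) (indicator (ball (0::'a) (2*r))) x = measure lebesgue ?S"
    unfolding conv_def eq by simp
  moreover have "measure lebesgue (ball (0::'a) r) \<le> measure lebesgue ?S"
  proof (rule measure_mono_fmeasurable)
    show "ball (0::'a) r \<subseteq> ?S"
    proof
      fix y :: 'a assume y: "y \<in> ball 0 r"
      have "norm (x - y) \<le> norm x + norm y" by (rule norm_triangle_ineq4)
      then show "y \<in> ?S" using assms y by (auto simp: dist_norm)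
    qed
    show "ball (0::'a) r \<in> sets lebesgue" by simp
    have "emeasure lebesgue ?S \<le> emeasure lebesgue (ball (0::'a) (2*r))"
      by (intro emeasure_mono) auto
    also have "\<dots> < \<infinity>" by (subst emeasure_lebesgue_ball) (use assms in auto)
    finally show "?S \<in> fmeasurable lebesgue" by (auto intro: fmeasurableI)
  qed
  ultimately show ?thesis using measure_lebesgue_ball[of r, where 'a='a] assms by simp
qed

lemma wint_lower:
  fixes h :: "'a::euclidean_space \<Rightarrow> real"
  assumes "0 < r" "r \<le> 1" "0 \<le> V" "\<And>x. x \<in> ball 0 r \<Longrightarrow> V \<le> \<bar>h x\<bar>" "1 \<le> p"
  shows "ennreal (2 powr (-\<bar>p * s\<bar>) * V powr p * (unit_ball_vol DIM('a) * r ^ DIM('a))) \<le> wint (ennreal p) s h"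
proof -
  have "ennreal (2 powr (-\<bar>p * s\<bar>) * V powr p * (unit_ball_vol DIM('a) * r ^ DIM('a)))
      = ennreal (2 powr (-\<bar>p * s\<bar>) * V powr p) * emeasure lebesgue (ball (0::'a) r)"
    by (subst emeasure_lebesgue_ball) (use assms in \<open>auto simp: ennreal_mult\<close>)
  also have "\<dots> = (\<integral>\<^sup>+ x. ennreal (2 powr (-\<bar>p * s\<bar>) * V powr p) * indicator (ball (0::'a) r) x \<partial>lebesgue)"
    by (rule nn_integral_cmult_indicator[symmetric]) simp
  also have "\<dots> \<le> wint (ennreal p) s h"
    unfolding wint_def
  proof (intro nn_integral_mono)
    fix x :: 'a
    show "ennreal (2 powr (-\<bar>p * s\<bar>) * V powr p) * indicator (ball 0 r) x
       \<le> ennreal (\<bar>h x\<bar> powr enn2real (ennreal p) * jbr x powr (enn2real (ennreal p) * s))"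
    proof (cases "x \<in> ball 0 r")
      case True
      then have n1: "norm x \<le> 1" using assms by auto
      have a: "2 powr (-\<bar>p * s\<bar>) \<le> jbr x powr (p * s)" using jbr_bounds(2)[OF n1] by blast
      have b: "V powr p \<le> \<bar>h x\<bar> powr p" using assms True by (intro powr_mono2) auto
      have "2 powr (-\<bar>p * s\<bar>) * V powr p \<le> jbr x powr (p * s) * \<bar>h x\<bar> powr p"
        by (intro mult_mono a b) auto
      then show ?thesis using True assms by (auto simp: ennreal_leI mult.commute)
    next
      case False then show ?thesis by simp
    qed
  qed
  finally show ?thesis .
qed

lemma wsup_lower:
  fixes h :: "'a::euclidean_space \<Rightarrow> real"
  assumes "0 < r" "r \<le> 1" "0 \<le> V" "\<And>x. x \<in> ball 0 r \<Longrightarrow> V \<le> \<bar>h x\<bar>"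
  shows "ereal (2 powr (-\<bar>s\<bar>) * V) \<le> wsup s h"
proof (rule ccontr)
  let ?f = "\<lambda>x. ereal (\<bar>h x\<bar> * jbr x powr s)"
  assume "\<not> ?thesis"
  then have lt: "wsup s h < ereal (2 powr (-\<bar>s\<bar>) * V)" by simp
  have "AE x in lebesgue. ?f x \<le> wsup s h" unfolding wsup_def by (rule esssup_AE)
  then have "AE x in lebesgue. x \<notin> ball (0::'a) r"
  proof eventually_elim
    case (elim x)
    show ?case
    proof
      assume xb: "x \<in> ball 0 r"
      then have n1: "norm x \<le> 1" using assms by auto
      have a: "2 powr (-\<bar>s\<bar>) \<le> jbr x powr s" using jbr_bounds(2)[OF n1] by blast
      have "2 powr (-\<bar>s\<bar>) * V \<le> \<bar>h x\<bar> * jbr x powr s"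
        using assms xb by (subst mult.commute, intro mult_mono a) auto
      then show False using elim lt by (meson ereal_less_eq(3) leD order.trans)
    qed
  qed
  then have "ball (0::'a) r \<in> null_sets lebesgue" by (subst AE_iff_null_sets) auto
  then have "emeasure lebesgue (ball (0::'a) r) = 0" by auto
  then show False using assms emeasure_lebesgue_ball[of r, where 'a='a] unit_ball_vol_pos[of "real DIM('a)"] by simp
qed



lemma small_contra:
  fixes a b c0 C1 r0 :: real
  assumes "a < b" "0 < c0" "0 < r0" "\<And>r. 0 < r \<Longrightarrow> r \<le> r0 \<Longrightarrow> c0 * r powr a \<le> C1 * r powr b"
  shows False
proof (cases "C1 \<le> 0")
  case True
  have "c0 * r0 powr a > 0" using assms by simp
  moreover have "C1 * r0 powr b \<le> 0" using True by (simp add: mult_nonpos_nonneg)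
  ultimately show False using assms(4)[of r0] assms by linarith
next
  case False
  then have C1: "C1 > 0" by simp
  define X where "X = (c0 / (2 * C1)) powr (1 / (b - a))"
  have X: "X > 0" unfolding X_def using assms C1 by simp
  define r where "r = min r0 X"
  have r: "0 < r" "r \<le> r0" "r \<le> X" unfolding r_def using X assms by auto
  have "r powr (b - a) \<le> X powr (b - a)" using r assms by (intro powr_mono2) auto
  also have "X powr (b - a) = c0 / (2 * C1)" unfolding X_def using assms C1
    by (simp add: powr_powr)
  finally have rb: "r powr (b - a) \<le> c0 / (2 * C1)" .
  have "c0 * r powr a \<le> C1 * r powr b" using assms(4) r by simp
  also have "r powr b = r powr a * r powr (b - a)" by (simp add: powr_add[symmetric])
  also have "C1 * (r powr a * r powr (b - a)) \<le> C1 * (r powr a * (c0 / (2 * C1)))"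
    using rb C1 r by (intro mult_left_mono) auto
  also have "\<dots> = c0 * r powr a / 2" using C1 by (simp add: field_simps)
  finally show False using r assms by simp
qed

lemma pw:
  fixes c r e :: real
  assumes "0 < c" "0 < r"
  shows "(c * r ^ N) powr e = c powr e * r powr (real N * e)"
  using assms by (simp add: powr_mult powr_realpow[symmetric] powr_powr)



lemma key:
  fixes p1 p2 :: real and q :: ennreal
  assumes p1: "1 \<le> p1" and p2: "1 \<le> p2" and q: "1 \<le> q"
    and ci: "conv_incl TYPE('a::euclidean_space) (ennreal p1) s1 (ennreal p2) s2 q s"
  shows "1/p1 + 1/p2 \<le> 1 + (if q = top then 0 else 1 / enn2real q)"
proof (rule ccontr)
  define A where "A = 1 + (if q = top then 0 else 1 / enn2real q)"
  define \<alpha> where "\<alpha> = 1/p1 + 1/p2"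
  assume "\<not> ?thesis"
  then have lt: "A < \<alpha>" unfolding A_def \<alpha>_def by simp
  obtain C where C: "\<And>(f::'a \<Rightarrow> real) g. f \<in> Lw (ennreal p1) s1 \<Longrightarrow> g \<in> Lw (ennreal p2) s2 \<Longrightarrow>
        conv f g \<in> Lw q s \<and> Lw_norm q s (conv f g) \<le> C * Lw_norm (ennreal p1) s1 f * Lw_norm (ennreal p2) s2 g"
    using ci unfolding conv_incl_def by blast
  define U where "U = unit_ball_vol (real DIM('a))"
  define N where "N = DIM('a)"
  have U: "U > 0" unfolding U_def by simp
  have N: "real N \<ge> 1" unfolding N_def by simp
  define K1 where "K1 = 2 powr \<bar>p1 * s1\<bar> * U * 2 ^ N"
  define K2 where "K2 = 2 powr \<bar>p2 * s2\<bar> * U * 2 ^ N"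
  have K1: "K1 > 0" and K2: "K2 > 0" unfolding K1_def K2_def using U by auto
  define C' where "C' = max C 0"
  define c0 where "c0 = (if q = top then 2 powr (-\<bar>s\<bar>) * U
     else (2 powr (-\<bar>enn2real q * s\<bar>)) powr (1 / enn2real q) * U powr A)"
  have c0: "c0 > 0" unfolding c0_def using U by auto
  define C1 where "C1 = C' * (K1 powr (1/p1) * K2 powr (1/p2))"
  have bound: "c0 * r powr (real N * A) \<le> C1 * r powr (real N * \<alpha>)" if r: "0 < r" "r \<le> 1/2" for r
  proof -
    define f :: "'a \<Rightarrow> real" where "f = indicator (ball 0 (2*r))"
    have f1: "f \<in> Lw (ennreal p1) s1" unfolding f_def using r p1 by (intro ind_in_Lw) auto
    have f2: "f \<in> Lw (ennreal p2) s2" unfolding f_def using r p2 by (intro ind_in_Lw) auto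
    from C[OF f1 f2] have mem: "conv f f \<in> Lw q s"
      and ineq: "Lw_norm q s (conv f f) \<le> C * Lw_norm (ennreal p1) s1 f * Lw_norm (ennreal p2) s2 f"
      by auto
    have n1: "Lw_norm (ennreal p1) s1 f \<le> (K1 * r ^ N) powr (1/p1)"
      using ind_norm_upper[of "2*r" p1 s1, where 'a='a] r p1
      unfolding f_def K1_def U_def N_def by (simp add: power_mult_distrib mult.assoc)
    have n2: "Lw_norm (ennreal p2) s2 f \<le> (K2 * r ^ N) powr (1/p2)"
      using ind_norm_upper[of "2*r" p2 s2, where 'a='a] r p2
      unfolding f_def K2_def U_def N_def by (simp add: power_mult_distrib mult.assoc)
    have n1p: "Lw_norm (ennreal p1) s1 f \<ge> 0" and n2p: "Lw_norm (ennreal p2) s2 f \<ge> 0"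
      unfolding Lw_norm_def by auto
    have "C * Lw_norm (ennreal p1) s1 f * Lw_norm (ennreal p2) s2 f
        \<le> C' * Lw_norm (ennreal p1) s1 f * Lw_norm (ennreal p2) s2 f"
      unfolding C'_def using n1p n2p by (intro mult_right_mono) auto
    also have "\<dots> \<le> C' * (K1 * r ^ N) powr (1/p1) * (K2 * r ^ N) powr (1/p2)"
      unfolding C'_def using n1 n2 n1p n2p by (intro mult_mono) auto
    also have "\<dots> = C1 * r powr (real N * \<alpha>)"
      unfolding C1_def \<alpha>_def using K1 K2 r
      by (simp add: pw powr_add[symmetric] distrib_left)
    finally have up: "Lw_norm q s (conv f f) \<le> C1 * r powr (real N * \<alpha>)" using ineq by linarith
    define V where "V = U * r ^ N"
    have V: "V > 0" unfolding V_def using U r by simp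
    have cl: "\<And>x. x \<in> ball 0 r \<Longrightarrow> V \<le> \<bar>conv f f x\<bar>"
      using conv_lower[OF r(1)] unfolding V_def U_def N_def f_def
      by (metis (no_types, lifting) abs_ge_self order_trans)
    have low: "c0 * r powr (real N * A) \<le> Lw_norm q s (conv f f)"
    proof (cases "q = top")
      case True
      have "ereal (2 powr (-\<bar>s\<bar>) * V) \<le> wsup s (conv f f)"
        using wsup_lower[of r V "conv f f" s] r V cl by auto
      moreover have "wsup s (conv f f) < top" using mem True unfolding Lw_def by auto
      ultimately have "2 powr (-\<bar>s\<bar>) * V \<le> real_of_ereal (wsup s (conv f f))"
        by (cases "wsup s (conv f f)") auto
      moreover have "c0 * r powr (real N * A) = 2 powr (-\<bar>s\<bar>) * V"
        unfolding c0_def A_def V_def using True r by (simp add: powr_realpow)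
      ultimately show ?thesis unfolding Lw_norm_def using True by simp
    next
      case False
      define p where "p = enn2real q"
      have qp: "q = ennreal p" unfolding p_def using False by (cases q) auto
      have p: "1 \<le> p" using q qp by simp
      have "ennreal (2 powr (-\<bar>p * s\<bar>) * V powr p * (unit_ball_vol DIM('a) * r ^ DIM('a)))
          \<le> wint (ennreal p) s (conv f f)"
        using wint_lower[of r V "conv f f" p s] r V cl p by auto
      moreover have "wint q s (conv f f) < top" using mem False unfolding Lw_def by auto
      ultimately have "2 powr (-\<bar>p * s\<bar>) * V powr p * V \<le> enn2real (wint q s (conv f f))"
        unfolding V_def U_def N_def qp using V U
        by (metis (no_types, lifting) enn2real_ennreal enn2real_mono V_def U_def N_def
             mult_nonneg_nonneg powr_ge_zero less_imp_le zero_le_numeral)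
      then have "(2 powr (-\<bar>p * s\<bar>) * V powr p * V) powr (1/p) \<le> Lw_norm q s (conv f f)"
        unfolding Lw_norm_def using False p V qp by (auto intro!: powr_mono2)
      moreover have "(2 powr (-\<bar>p * s\<bar>) * V powr p * V) powr (1/p) = c0 * r powr (real N * A)"
      proof -
        have "2 powr (-\<bar>p * s\<bar>) * V powr p * V = 2 powr (-\<bar>p * s\<bar>) * V powr (p + 1)"
          using V by (simp add: powr_add)
        moreover have "(2 powr (-\<bar>p * s\<bar>) * V powr (p + 1)) powr (1/p)
            = (2 powr (-\<bar>p * s\<bar>)) powr (1/p) * V powr A"
          using V p unfolding A_def p_def[symmetric] using False
          by (simp add: powr_mult powr_powr add_divide_distrib)
        moreover have "V powr A = U powr A * r powr (real N * A)"
          unfolding V_def using U r by (simp add: pw)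
        ultimately show ?thesis unfolding c0_def p_def[symmetric] using False by (simp add: mult.assoc)
      qed
      ultimately show ?thesis by simp
    qed
    show ?thesis using low up by linarith
  qed
  show False
    by (rule small_contra[of "real N * A" "real N * \<alpha>" c0 "1/2" C1])
       (use lt N c0 bound in auto)
qed



lemma inv_enn:
  fixes x :: ennreal
  assumes "1 \<le> x"
  shows "1 / x = ennreal (if x = top then 0 else 1 / enn2real x)"
    "x \<noteq> top \<Longrightarrow> 1 \<le> enn2real x" "x \<noteq> top \<Longrightarrow> x = ennreal (enn2real x)"
    "(if x = top then 0 else 1 / enn2real x) \<le> 1"
    "0 \<le> (if x = top then 0 else 1 / enn2real x)"
proof -
  show e: "x \<noteq> top \<Longrightarrow> 1 \<le> enn2real x"
  proof -
    assume "x \<noteq> top"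
    then have "x < top" by (simp add: less_top)
    from enn2real_mono[OF assms this] show ?thesis by simp
  qed
  show "x \<noteq> top \<Longrightarrow> x = ennreal (enn2real x)" by (simp add: less_top)
  show "(if x = top then 0 else 1 / enn2real x) \<le> 1" using e by auto
  show "0 \<le> (if x = top then 0 else 1 / enn2real x)" by simp
  show "1 / x = ennreal (if x = top then 0 else 1 / enn2real x)"
  proof (cases "x = top")
    case False
    then have x: "x = ennreal (enn2real x)" by (simp add: less_top)
    have "enn2real x > 0" using e False by simp
    then have "ennreal 1 / ennreal (enn2real x) = ennreal (1 / enn2real x)"
      by (intro divide_ennreal) auto
    then show ?thesis using False x by simp
  qed simp
qed


theorem proposition4p2:
  fixes q q1 q2 :: ennreal and s s1 s2 :: real
  assumes "1 \<le> q" "1 \<le> q1" "1 \<le> q2"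
    and "conv_incl TYPE('a::euclidean_space) q1 s1 q2 s2 q s"
  shows "1 / q1 + 1 / q2 \<le> 1 + 1 / q"
proof -
  define i where "i = (\<lambda>x::ennreal. if x = top then 0 else 1 / enn2real x)"
  have iq: "1 / q = ennreal (i q)" "1 / q1 = ennreal (i q1)" "1 / q2 = ennreal (i q2)"
    using inv_enn(1)[OF assms(1)] inv_enn(1)[OF assms(2)] inv_enn(1)[OF assms(3)]
    unfolding i_def by auto
  have i0: "0 \<le> i q" "0 \<le> i q1" "0 \<le> i q2" unfolding i_def by auto
  have eq: "1 / q1 + 1 / q2 = ennreal (i q1 + i q2)" "1 + 1 / q = ennreal (1 + i q)"
    using i0 by (simp_all only: iq ennreal_plus ennreal_1 zero_le_one)
  have b: "i q1 \<le> 1" "i q2 \<le> 1" "0 \<le> i q" "0 \<le> i q1" "0 \<le> i q2"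
    using inv_enn(4,5)[OF assms(1)] inv_enn(4,5)[OF assms(2)] inv_enn(4,5)[OF assms(3)]
    unfolding i_def by auto
  have "i q1 + i q2 \<le> 1 + i q"
  proof (cases "q1 = top \<or> q2 = top")
    case True
    then have "i q1 = 0 \<or> i q2 = 0" unfolding i_def by auto
    then show ?thesis using b by auto
  next
    case False
    then have "q1 = ennreal (enn2real q1)" "q2 = ennreal (enn2real q2)"
      using inv_enn(3)[OF assms(2)] inv_enn(3)[OF assms(3)] by auto
    then have ci: "conv_incl TYPE('a) (ennreal (enn2real q1)) s1 (ennreal (enn2real q2)) s2 q s"
      using assms(4) by simp
    show ?thesis using key[OF _ _ assms(1) ci] inv_enn(2)[OF assms(2)] inv_enn(2)[OF assms(3)] False
      unfolding i_def by auto
  qed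
  then show ?thesis unfolding eq by (rule ennreal_leI)
qed


end
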